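(* Let $N\ge 1$ and consider $N$ coupled two-level systems (qubits) with Hilbert space $(\mathbb{C}^2)^{\otimes N}$ and Ising-like Hamiltonian $$H_S=\frac{1}{2}\,\mathbf{I}+\sum_{j=1}^{N}\frac{\epsilon_j}{2}\,\sigma_z^{j}+\sum_{1\le j<k\le N}\Delta_{zz}^{jk}\,\sigma_z^{j}\sigma_z^{k},$$ where $\epsilon_j,\Delta_{zz}^{jk}\in\mathbb{R}$ (set $\Delta_{zz}^{kj}:=\Delta_{zz}^{jk}$). Let $\rho_M$ be a post-measurement state (any density matrix on $(\mathbb{C}^2)^{\otimes N}$, obtained from a projective or POVM measurement). For $\boldsymbol\theta=(\theta_1,\dots,\theta_N)\in\mathbb{R}^N$ apply the local feedback unitary $U(\boldsymbol\theta)=\bigotimes_{j=1}^N U_j(\theta_j)$, $U_j(\theta_j)=\exp(-i\theta_j\sigma_y^{j}/2)$, giving $\rho_F=U(\boldsymbol\theta)\rho_M U(\boldsymbol\theta)^\dagger$ and post-feedback energy $E_F(\boldsymbol\theta)=\mathrm{Tr}(\rho_F H_S)$. For each $j$ and each $k\neq j$, let $\widetilde{\sigma_z^{k}}(\theta_k):=\sigma_z^{k}\cos\theta_k-\sigma_x^{k}\sin\theta_k$ (the rotated operator $U_k^\dagger(\theta_k)\sigma_z^kU_k(\theta_k)$), and define, as functions of the other angles $\{\theta_k\}_{k\ne j}$, $$A_j=\frac{\epsilon_j}{2}\,\mathrm{Tr}\big(\rho_M\sigma_z^{j}\big)+\sum_{k\neq j}\Delta_{zz}^{jk}\,\mathrm{Tr}\big(\rho_M\,\sigma_z^{j}\,\widetilde{\sigma_z^{k}}(\theta_k)\big),$$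 $$B_j=\frac{\epsilon_j}{2}\,\mathrm{Tr}\big(\rho_M\sigma_x^{j}\big)+\sum_{k\neq j}\Delta_{zz}^{jk}\,\mathrm{Tr}\big(\rho_M\,\sigma_x^{j}\,\widetilde{\sigma_z^{k}}(\theta_k)\big).$$ Then the optimal local feedback angles $\{\theta_j^\ast\}_{j=1}^N$ (minimizers of $E_F$, which are in particular stationary points $\partial E_F/\partial\theta_j=0$ for all $j$) satisfy the set of self-consistent equations $$\tan\theta_j^\ast=\frac{-B_j(\theta_1^\ast,\dots,\theta_{j-1}^\ast,\theta_{j+1}^\ast,\dots,\theta_N^\ast)}{A_j(\theta_1^\ast,\dots,\theta_{j-1}^\ast,\theta_{j+1}^\ast,\dots,\theta_N^\ast)},\qquad\text{i.e.}\qquad \theta_j^\ast\equiv\operatorname{atan2}(-B_j,A_j)\pmod{\pi},$$ for all $1\le j\le N$.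
   Context: $\sigma_x^{j},\sigma_y^{j},\sigma_z^{j}$ denote the Pauli matrices acting on the $j$-th tensor factor (identity on the others); $\mathbf{I}$ is the identity on $(\mathbb{C}^2)^{\otimes N}$. Under $U_j(\theta_j)=\exp(-i\theta_j\sigma_y^j/2)$ one has $U_j^\dagger\sigma_z^jU_j=\sigma_z^j\cos\theta_j-\sigma_x^j\sin\theta_j$ and $U_j^\dagger\sigma_x^jU_j=\sigma_x^j\cos\theta_j+\sigma_z^j\sin\theta_j$. $\operatorname{atan2}(y,x)$ is the two-argument arctangent. *)

theory Defs
  imports Complex_Main "Jordan_Normal_Form.Schur_Decomposition"
begin

text \<open>Hilbert space (C^2)^(tensor N), dimension 2^N. The computational basis state
  with index r < 2^N has qubit j in state |bit r j>, with |0> the +1 eigenvector of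
  sigma_z and |1> the -1 eigenvector.\<close>

definition sigma_z :: "nat \<Rightarrow> nat \<Rightarrow> complex mat" where
  "sigma_z N j = mat (2^N) (2^N)
     (\<lambda>(r,c). if r = c then (if bit r j then -1 else 1) else 0)"

definition sigma_x :: "nat \<Rightarrow> nat \<Rightarrow> complex mat" where
  "sigma_x N j = mat (2^N) (2^N)
     (\<lambda>(r,c). if c = flip_bit j r then 1 else 0)"

definition sigma_y :: "nat \<Rightarrow> nat \<Rightarrow> complex mat" where
  "sigma_y N j = mat (2^N) (2^N)
     (\<lambda>(r,c). if c = flip_bit j r then (if bit r j then \<i> else - \<i>) else 0)"

definition idm :: "nat \<Rightarrow> complex mat" where
  "idm N = 1\<^sub>m (2^N)"

definition msum :: "nat \<Rightarrow> complex mat list \<Rightarrow> complex mat" where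
  "msum N Ms = foldr (+) Ms (0\<^sub>m (2^N) (2^N))"

text \<open>U_j(theta) = exp(-i theta sigma_y^j / 2) = cos(theta/2) I - i sin(theta/2) sigma_y^j
  (since (sigma_y^j)^2 = I).\<close>
definition U_loc :: "nat \<Rightarrow> nat \<Rightarrow> real \<Rightarrow> complex mat" where
  "U_loc N j \<theta> = complex_of_real (cos (\<theta>/2)) \<cdot>\<^sub>m idm N
                   - (\<i> * complex_of_real (sin (\<theta>/2))) \<cdot>\<^sub>m sigma_y N j"

text \<open>U(theta) = tensor product of the U_j(theta_j) = product of the (commuting)
  single-site operators U_j(theta_j), j = 0..N-1.\<close>
definition U_fb :: "nat \<Rightarrow> (nat \<Rightarrow> real) \<Rightarrow> complex mat" where
  "U_fb N \<theta> = foldr (\<lambda>j M. U_loc N j (\<theta> j) * M) [0..<N] (idm N)"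

text \<open>Qubits are indexed 0..N-1; Delta j k is used for j < k (Delta^{kj} := Delta^{jk}).\<close>
definition H_S :: "nat \<Rightarrow> (nat \<Rightarrow> real) \<Rightarrow> (nat \<Rightarrow> nat \<Rightarrow> real) \<Rightarrow> complex mat" where
  "H_S N \<epsilon> \<Delta> = msum N
     ([(1/2) \<cdot>\<^sub>m idm N]
      @ map (\<lambda>j. complex_of_real (\<epsilon> j / 2) \<cdot>\<^sub>m sigma_z N j) [0..<N]
      @ concat (map (\<lambda>j. map (\<lambda>k. complex_of_real (\<Delta> j k) \<cdot>\<^sub>m (sigma_z N j * sigma_z N k))
                              [Suc j..<N]) [0..<N]))"

definition mtrace :: "complex mat \<Rightarrow> complex" where
  "mtrace A = (\<Sum>i<dim_row A. A $$ (i, i))"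

definition density_matrix :: "nat \<Rightarrow> complex mat \<Rightarrow> bool" where
  "density_matrix N \<rho> \<longleftrightarrow> \<rho> \<in> carrier_mat (2^N) (2^N)
     \<and> mat_adjoint \<rho> = \<rho>
     \<and> (\<forall>v \<in> carrier_vec (2^N). 0 \<le> Re (v \<bullet>c (\<rho> *\<^sub>v v)))
     \<and> mtrace \<rho> = 1"

definition E_F :: "nat \<Rightarrow> (nat \<Rightarrow> real) \<Rightarrow> (nat \<Rightarrow> nat \<Rightarrow> real) \<Rightarrow> complex mat
                   \<Rightarrow> (nat \<Rightarrow> real) \<Rightarrow> real" where
  "E_F N \<epsilon> \<Delta> \<rho> \<theta> = Re (mtrace (U_fb N \<theta> * \<rho> * mat_adjoint (U_fb N \<theta>) * H_S N \<epsilon> \<Delta>))"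

definition sigma_z_rot :: "nat \<Rightarrow> nat \<Rightarrow> real \<Rightarrow> complex mat" where
  "sigma_z_rot N k \<theta> = complex_of_real (cos \<theta>) \<cdot>\<^sub>m sigma_z N k
                        - complex_of_real (sin \<theta>) \<cdot>\<^sub>m sigma_x N k"

definition A_coef :: "nat \<Rightarrow> (nat \<Rightarrow> real) \<Rightarrow> (nat \<Rightarrow> nat \<Rightarrow> real) \<Rightarrow> complex mat
                      \<Rightarrow> nat \<Rightarrow> (nat \<Rightarrow> real) \<Rightarrow> real" where
  "A_coef N \<epsilon> \<Delta> \<rho> j \<theta> =
     \<epsilon> j / 2 * Re (mtrace (\<rho> * sigma_z N j))
     + (\<Sum>k\<in>{0..<N} - {j}. \<Delta> (min j k) (max j k)
          * Re (mtrace (\<rho> * sigma_z N j * sigma_z_rot N k (\<theta> k))))"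

definition B_coef :: "nat \<Rightarrow> (nat \<Rightarrow> real) \<Rightarrow> (nat \<Rightarrow> nat \<Rightarrow> real) \<Rightarrow> complex mat
                      \<Rightarrow> nat \<Rightarrow> (nat \<Rightarrow> real) \<Rightarrow> real" where
  "B_coef N \<epsilon> \<Delta> \<rho> j \<theta> =
     \<epsilon> j / 2 * Re (mtrace (\<rho> * sigma_x N j))
     + (\<Sum>k\<in>{0..<N} - {j}. \<Delta> (min j k) (max j k)
          * Re (mtrace (\<rho> * sigma_x N j * sigma_z_rot N k (\<theta> k))))"

definition atan2 :: "real \<Rightarrow> real \<Rightarrow> real" where
  "atan2 y x =
    (if x > 0 then arctan (y / x)
     else if x < 0 \<and> y \<ge> 0 then arctan (y / x) + pi
     else if x < 0 \<and> y < 0 then arctan (y / x) - pi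
     else if y > 0 then pi / 2
     else if y < 0 then - (pi / 2)
     else 0)"

end

theory Submission
  imports Defs
begin


lemma flip_bit_less[simp]:
  fixes r :: nat
  assumes "r < 2^N" "j < N" shows "flip_bit j r < 2^N"
proof -
  have "take_bit N r = r" using assms by (simp add: take_bit_nat_eq_self_iff)
  hence "take_bit N (flip_bit j r) = flip_bit j r"
    using assms by (simp add: take_bit_flip_bit_eq)
  thus ?thesis by (metis take_bit_nat_less_exp)
qed

lemma flip_flip[simp]: "flip_bit j (flip_bit j (r::nat)) = r"
  by (rule bit_eqI) (auto simp: bit_flip_bit_iff)

lemma bit_flip[simp]: "bit (flip_bit a (r::nat)) j = (if j = a then \<not> bit r j else bit r j)"
  by (auto simp: bit_flip_bit_iff)

lemma flip_neq[simp]: "flip_bit j (r::nat) \<noteq> r" "r \<noteq> flip_bit j r"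
proof -
  show "flip_bit j (r::nat) \<noteq> r"
  proof
    assume "flip_bit j r = r"
    hence "bit (flip_bit j r) j = bit r j" by simp
    thus False by simp
  qed
  thus "r \<noteq> flip_bit j r" by metis
qed

lemma flip_inj[simp]: "(flip_bit a (x::nat) = flip_bit a y) = (x = y)"
  by (metis flip_flip)

lemma flip_eq_flip[simp]: "(flip_bit a (r::nat) = flip_bit j r) = (a = j)"
proof
  assume h: "flip_bit a r = flip_bit j r"
  show "a = j"
  proof (rule ccontr)
    assume "a \<noteq> j"
    have "bit (flip_bit a r) a = bit (flip_bit j r) a" using h by simp
    thus False using \<open>a \<noteq> j\<close> by simp
  qed
qed simp

lemma flip2_neq[simp]: "a \<noteq> j \<Longrightarrow> flip_bit a (flip_bit j (r::nat)) \<noteq> r"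
proof
  assume "a \<noteq> j" "flip_bit a (flip_bit j r) = r"
  hence "bit (flip_bit a (flip_bit j r)) a = bit r a" by simp
  thus False using \<open>a \<noteq> j\<close> by simp
qed

lemma flip_comm: "flip_bit a (flip_bit j (r::nat)) = flip_bit j (flip_bit a r)"
  by (rule bit_eqI) (auto simp: bit_flip_bit_iff)

lemma mtrace_comm:
  assumes "A \<in> carrier_mat n n" "B \<in> carrier_mat n n"
  shows "mtrace (A * B) = mtrace (B * A)"
proof -
  have "mtrace (A*B) = (\<Sum>i<n. \<Sum>k<n. A $$ (i,k) * B $$ (k,i))"
    using assms by (simp add: mtrace_def scalar_prod_def atLeast0LessThan)
  also have "\<dots> = (\<Sum>k<n. \<Sum>i<n. B $$ (k,i) * A $$ (i,k))"
    by (subst sum.swap) (simp add: mult.commute)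
  also have "\<dots> = mtrace (B*A)"
    using assms by (simp add: mtrace_def scalar_prod_def atLeast0LessThan)
  finally show ?thesis .
qed

lemma mult_entry_supp:
  assumes "A \<in> carrier_mat n n" "B \<in> carrier_mat n n" "r < n" "c < n"
    "S \<subseteq> {..<n}" "\<And>k. k < n \<Longrightarrow> k \<notin> S \<Longrightarrow> A $$ (r,k) = 0"
  shows "(A*B) $$ (r,c) = (\<Sum>k\<in>S. A $$ (r,k) * B $$ (k,c))"
proof -
  have "(A*B) $$ (r,c) = (\<Sum>k\<in>{..<n}. A $$ (r,k) * B $$ (k,c))"
    using assms by (simp add: scalar_prod_def atLeast0LessThan)
  also have "\<dots> = (\<Sum>k\<in>S. A $$ (r,k) * B $$ (k,c))"
    by (rule sum.mono_neutral_right) (use assms in auto)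
  finally show ?thesis .
qed

lemma mult2:
  assumes "A \<in> carrier_mat n n" "B \<in> carrier_mat n n" "r < n" "c < n" "q < n" "q \<noteq> r"
    "\<And>k. k < n \<Longrightarrow> k \<noteq> r \<Longrightarrow> k \<noteq> q \<Longrightarrow> A $$ (r,k) = 0"
  shows "(A*B) $$ (r,c) = A $$ (r,r) * B $$ (r,c) + A $$ (r,q) * B $$ (q,c)"
proof -
  have "(A*B) $$ (r,c) = (\<Sum>k\<in>{r,q}. A $$ (r,k) * B $$ (k,c))"
    by (rule mult_entry_supp[OF assms(1-4)]) (use assms in auto)
  thus ?thesis using assms(6) by simp
qed

lemma mult1:
  assumes "A \<in> carrier_mat n n" "B \<in> carrier_mat n n" "r < n" "c < n" "q < n"
    "\<And>k. k < n \<Longrightarrow> k \<noteq> q \<Longrightarrow> A $$ (r,k) = 0"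
  shows "(A*B) $$ (r,c) = A $$ (r,q) * B $$ (q,c)"
proof -
  have "(A*B) $$ (r,c) = (\<Sum>k\<in>{q}. A $$ (r,k) * B $$ (k,c))"
    by (rule mult_entry_supp[OF assms(1-4)]) (use assms in auto)
  thus ?thesis by simp
qed

lemma adj_dims[simp]: "dim_row (mat_adjoint A) = dim_col A" "dim_col (mat_adjoint A) = dim_row A"
  unfolding mat_adjoint_def by simp_all
lemma adj_index[simp]: "i < dim_col A \<Longrightarrow> j < dim_row A \<Longrightarrow> mat_adjoint A $$ (i,j) = cnj (A $$ (j,i))"
  unfolding mat_adjoint_def mat_of_rows_def by simp
lemma adj_carrier[simp]: "A \<in> carrier_mat n m \<Longrightarrow> mat_adjoint A \<in> carrier_mat m n"
  unfolding carrier_mat_def by simp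

lemma adj_mult:
  fixes A B :: "complex mat"
  assumes "A \<in> carrier_mat n n" "B \<in> carrier_mat n n"
  shows "mat_adjoint (A * B) = mat_adjoint B * mat_adjoint A"
proof (rule eq_matI)
  fix i j assume "i < dim_row (mat_adjoint B * mat_adjoint A)" "j < dim_col (mat_adjoint B * mat_adjoint A)"
  hence ij: "i < n" "j < n" using assms by auto
  show "mat_adjoint (A * B) $$ (i, j) = (mat_adjoint B * mat_adjoint A) $$ (i, j)"
  proof -
    have "mat_adjoint (A * B) $$ (i, j) = cnj ((A*B) $$ (j,i))"
      using assms ij by (simp add: carrier_matD)
    also have "\<dots> = (\<Sum>k\<in>{0..<n}. cnj (B $$ (k,i)) * cnj (A $$ (j,k)))"
      using assms ij by (simp add: scalar_prod_def cnj_sum mult.commute carrier_matD)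
    also have "\<dots> = (mat_adjoint B * mat_adjoint A) $$ (i, j)"
      using assms ij by (simp add: scalar_prod_def carrier_matD)
    finally show ?thesis .
  qed
qed (use assms in auto)

lemma ii_mult[simp]: "\<i> * x * \<i> = - (x::complex)"
proof -
  have "\<i> * x * \<i> = (\<i> * \<i>) * x" by (simp only: mult_ac)
  thus ?thesis by simp
qed

lemma carr[simp]:
  "sigma_z N j \<in> carrier_mat (2^N) (2^N)" "sigma_x N j \<in> carrier_mat (2^N) (2^N)"
  "sigma_y N j \<in> carrier_mat (2^N) (2^N)" "idm N \<in> carrier_mat (2^N) (2^N)"
  "U_loc N j t \<in> carrier_mat (2^N) (2^N)" "sigma_z_rot N j t \<in> carrier_mat (2^N) (2^N)"
  by (auto simp: sigma_z_def sigma_x_def sigma_y_def idm_def U_loc_def sigma_z_rot_def)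

lemma dims[simp]:
  "dim_row (sigma_z N j) = 2^N" "dim_col (sigma_z N j) = 2^N"
  "dim_row (sigma_x N j) = 2^N" "dim_col (sigma_x N j) = 2^N"
  "dim_row (sigma_y N j) = 2^N" "dim_col (sigma_y N j) = 2^N"
  "dim_row (idm N) = 2^N" "dim_col (idm N) = 2^N"
  "dim_row (U_loc N j t) = 2^N" "dim_col (U_loc N j t) = 2^N"
  "dim_row (sigma_z_rot N j t) = 2^N" "dim_col (sigma_z_rot N j t) = 2^N"
  by (auto simp: sigma_z_def sigma_x_def sigma_y_def idm_def U_loc_def sigma_z_rot_def)

lemma Z_e: "r < 2^N \<Longrightarrow> c < 2^N \<Longrightarrow> sigma_z N j $$ (r,c) = (if c = r then (if bit r j then -1 else 1) else 0)"
  by (auto simp: sigma_z_def)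
lemma X_e: "r < 2^N \<Longrightarrow> c < 2^N \<Longrightarrow> sigma_x N j $$ (r,c) = (if c = flip_bit j r then 1 else 0)"
  by (auto simp: sigma_x_def)
lemma I_e: "r < 2^N \<Longrightarrow> c < 2^N \<Longrightarrow> idm N $$ (r,c) = (if c = r then 1 else 0)"
  by (auto simp: idm_def)
lemma U_e: "r < 2^N \<Longrightarrow> c < 2^N \<Longrightarrow> U_loc N j t $$ (r,c) =
   (if c = r then complex_of_real (cos (t/2)) else if c = flip_bit j r then
      (if bit r j then complex_of_real (sin (t/2)) else - complex_of_real (sin (t/2))) else 0)"
  by (auto simp: U_loc_def sigma_y_def idm_def)
lemma R_e: "r < 2^N \<Longrightarrow> c < 2^N \<Longrightarrow> sigma_z_rot N j t $$ (r,c) =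
   (if c = r then (if bit r j then - complex_of_real (cos t) else complex_of_real (cos t))
    else if c = flip_bit j r then - complex_of_real (sin t) else 0)"
  by (auto simp: sigma_z_rot_def sigma_z_def sigma_x_def)



lemma cos2C: "complex_of_real (cos (2*h)) = complex_of_real (cos h) * complex_of_real (cos h) - complex_of_real (sin h) * complex_of_real (sin h)"
  by (simp add: cos_double power2_eq_square)
lemma sin2C: "complex_of_real (sin (2*h)) = 2 * complex_of_real (sin h) * complex_of_real (cos h)"
  by (simp add: sin_double)
lemma sc1C: "complex_of_real (cos h) * complex_of_real (cos h) + complex_of_real (sin h) * complex_of_real (sin h) = 1"
proof -
  have "cos h * cos h + sin h * sin h = 1" by (metis sin_cos_squared_add2 power2_eq_square add.commute)
  thus ?thesis by (metis of_real_1 of_real_add of_real_mult)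
qed

lemma adj_U:
  assumes "a < N"
  shows "mat_adjoint (U_loc N a t) = U_loc N a (-t)"
proof (rule eq_matI)
  fix r c assume "r < dim_row (U_loc N a (-t))" "c < dim_col (U_loc N a (-t))"
  hence rc: "r < 2^N" "c < 2^N" using carr(5) by (auto simp: carrier_matD)
  consider (d) "c = r" | (f) "c = flip_bit a r" | (o) "c \<noteq> r" "c \<noteq> flip_bit a r" by blast
  thus "mat_adjoint (U_loc N a t) $$ (r, c) = U_loc N a (- t) $$ (r, c)"
  proof cases
    case o
    hence "r \<noteq> flip_bit a c" by auto
    thus ?thesis using o rc assms carr(5)[of N a t] by (simp add: U_e carrier_matD)
  qed (use rc assms carr(5)[of N a t] in \<open>auto simp: U_e carrier_matD\<close>)
qed (use carr(5) in \<open>auto simp: carrier_matD\<close>)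

lemma UU:
  assumes "a < N"
  shows "U_loc N a (-t) * U_loc N a t = idm N"
proof (rule eq_matI)
  fix r c assume "r < dim_row (idm N)" "c < dim_col (idm N)"
  hence rc: "r < 2^N" "c < 2^N" using carr(4) by (auto simp: carrier_matD)
  have m: "(U_loc N a (-t) * U_loc N a t) $$ (r,c) = U_loc N a (-t) $$ (r,r) * U_loc N a t $$ (r,c)
     + U_loc N a (-t) $$ (r,flip_bit a r) * U_loc N a t $$ (flip_bit a r,c)"
    by (rule mult2[OF carr(5) carr(5)]) (use rc assms in \<open>auto simp: U_e\<close>)
  consider (d) "c = r" | (f) "c = flip_bit a r" | (o) "c \<noteq> r" "c \<noteq> flip_bit a r" by blast
  thus "(U_loc N a (-t) * U_loc N a t) $$ (r, c) = idm N $$ (r, c)"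
  proof cases
    case d thus ?thesis using rc assms unfolding m by (simp add: U_e I_e sc1C)
  next
    case f thus ?thesis using rc assms unfolding m by (simp add: U_e I_e)
  next
    case o thus ?thesis using rc assms unfolding m by (simp add: U_e I_e)
  qed
qed (use carr(4) carr(5) in \<open>auto simp: carrier_matD\<close>)



definition xrot :: "nat \<Rightarrow> nat \<Rightarrow> real \<Rightarrow> complex mat" where
  "xrot N k t = complex_of_real (cos t) \<cdot>\<^sub>m sigma_x N k + complex_of_real (sin t) \<cdot>\<^sub>m sigma_z N k"

lemma xrot_carr[simp]: "xrot N j t \<in> carrier_mat (2^N) (2^N)"
  "dim_row (xrot N j t) = 2^N" "dim_col (xrot N j t) = 2^N"
  by (auto simp: xrot_def)

lemma XR_e: "r < 2^N \<Longrightarrow> c < 2^N \<Longrightarrow> xrot N j t $$ (r,c) =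
   (if c = r then (if bit r j then - complex_of_real (sin t) else complex_of_real (sin t))
    else if c = flip_bit j r then complex_of_real (cos t) else 0)"
  by (auto simp: xrot_def sigma_z_def sigma_x_def)

lemma ZU_e:
  assumes "k < 2^N" "c < 2^N"
  shows "(sigma_z N j * U_loc N a t) $$ (k,c) = (if bit k j then -1 else 1) * U_loc N a t $$ (k,c)"
proof -
  have "(sigma_z N j * U_loc N a t) $$ (k,c) = sigma_z N j $$ (k,k) * U_loc N a t $$ (k,c)"
    by (rule mult1[OF carr(1) carr(5)]) (use assms in \<open>auto simp: Z_e\<close>)
  thus ?thesis using assms by (simp add: Z_e)
qed

lemma XU_e:
  assumes "k < 2^N" "c < 2^N" "j < N"
  shows "(sigma_x N j * U_loc N a t) $$ (k,c) = U_loc N a t $$ (flip_bit j k,c)"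
proof -
  have "(sigma_x N j * U_loc N a t) $$ (k,c) = sigma_x N j $$ (k,flip_bit j k) * U_loc N a t $$ (flip_bit j k,c)"
    by (rule mult1[OF carr(2) carr(5)]) (use assms in \<open>auto simp: X_e\<close>)
  thus ?thesis using assms by (simp add: X_e)
qed

lemma outer:
  assumes "r < 2^N" "c < 2^N" "a < N" "B \<in> carrier_mat (2^N) (2^N)"
  shows "(U_loc N a s * B) $$ (r,c) = U_loc N a s $$ (r,r) * B $$ (r,c)
     + U_loc N a s $$ (r,flip_bit a r) * B $$ (flip_bit a r,c)"
  by (rule mult2[OF carr(5) assms(4)]) (use assms in \<open>auto simp: U_e\<close>)

lemma CZ_same:
  assumes "a < N"
  shows "U_loc N a (-(2*h)) * (sigma_z N a * U_loc N a (2*h)) = sigma_z_rot N a (2*h)"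
proof (rule eq_matI)
  fix r c assume "r < dim_row (sigma_z_rot N a (2*h))" "c < dim_col (sigma_z_rot N a (2*h))"
  hence rc: "r < 2^N" "c < 2^N" by auto
  note m = outer[OF rc assms mult_carrier_mat[OF carr(1) carr(5)]]
  consider (d) "c = r" | (f) "c = flip_bit a r" | (o) "c \<noteq> r" "c \<noteq> flip_bit a r" by blast
  thus "(U_loc N a (-(2*h)) * (sigma_z N a * U_loc N a (2*h))) $$ (r, c) = sigma_z_rot N a (2*h) $$ (r, c)"
  proof cases
    case d thus ?thesis using rc assms unfolding m by (simp add: ZU_e U_e R_e cos2C sin2C del: index_mult_mat; simp add: algebra_simps; simp add: sc1C)
  next
    case f thus ?thesis using rc assms unfolding m by (simp add: ZU_e U_e R_e cos2C sin2C del: index_mult_mat; simp add: algebra_simps; simp add: sc1C)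
  next
    case o thus ?thesis using rc assms unfolding m by (simp add: ZU_e U_e R_e del: index_mult_mat)
  qed
qed auto

lemma CX_same:
  assumes "a < N"
  shows "U_loc N a (-(2*h)) * (sigma_x N a * U_loc N a (2*h)) = xrot N a (2*h)"
proof (rule eq_matI)
  fix r c assume "r < dim_row (xrot N a (2*h))" "c < dim_col (xrot N a (2*h))"
  hence rc: "r < 2^N" "c < 2^N" by auto
  note m = outer[OF rc assms mult_carrier_mat[OF carr(2) carr(5)]]
  consider (d) "c = r" | (f) "c = flip_bit a r" | (o) "c \<noteq> r" "c \<noteq> flip_bit a r" by blast
  thus "(U_loc N a (-(2*h)) * (sigma_x N a * U_loc N a (2*h))) $$ (r, c) = xrot N a (2*h) $$ (r, c)"
  proof cases
    case d thus ?thesis using rc assms unfolding m by (simp add: XU_e U_e XR_e cos2C sin2C del: index_mult_mat; simp add: algebra_simps; simp add: sc1C)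
  next
    case f thus ?thesis using rc assms unfolding m by (simp add: XU_e U_e XR_e cos2C sin2C del: index_mult_mat; simp add: algebra_simps; simp add: sc1C)
  next
    case o thus ?thesis using rc assms unfolding m by (simp add: XU_e U_e XR_e del: index_mult_mat)
  qed
qed auto

lemma CZ_other:
  assumes "a < N" "j < N" "a \<noteq> j"
  shows "U_loc N a (-t) * (sigma_z N j * U_loc N a t) = sigma_z N j"
proof (rule eq_matI)
  fix r c assume "r < dim_row (sigma_z N j)" "c < dim_col (sigma_z N j)"
  hence rc: "r < 2^N" "c < 2^N" by auto
  note m = outer[OF rc assms(1) mult_carrier_mat[OF carr(1) carr(5)]]
  consider (d) "c = r" | (f) "c = flip_bit a r" | (o) "c \<noteq> r" "c \<noteq> flip_bit a r" by blast
  thus "(U_loc N a (-t) * (sigma_z N j * U_loc N a t)) $$ (r, c) = sigma_z N j $$ (r, c)"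
  proof cases
    case d thus ?thesis using rc assms unfolding m by (simp add: ZU_e U_e Z_e sc1C del: index_mult_mat; simp add: algebra_simps; simp add: sc1C)
  next
    case f thus ?thesis using rc assms unfolding m by (simp add: ZU_e U_e Z_e del: index_mult_mat; simp add: algebra_simps; simp add: sc1C)
  next
    case o thus ?thesis using rc assms unfolding m by (simp add: ZU_e U_e Z_e del: index_mult_mat)
  qed
qed auto

lemma CX_other:
  assumes "a < N" "j < N" "a \<noteq> j"
  shows "U_loc N a (-t) * (sigma_x N j * U_loc N a t) = sigma_x N j"
proof (rule eq_matI)
  fix r c assume "r < dim_row (sigma_x N j)" "c < dim_col (sigma_x N j)"
  hence rc: "r < 2^N" "c < 2^N" by auto
  note m = outer[OF rc assms(1) mult_carrier_mat[OF carr(2) carr(5)]]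
  consider (d) "c = flip_bit j r" | (f) "c = flip_bit a (flip_bit j r)" | (o) "c \<noteq> flip_bit j r" "c \<noteq> flip_bit a (flip_bit j r)" by blast
  thus "(U_loc N a (-t) * (sigma_x N j * U_loc N a t)) $$ (r, c) = sigma_x N j $$ (r, c)"
  proof cases
    case d thus ?thesis using rc assms unfolding m by (simp add: XU_e U_e X_e sc1C flip_comm del: index_mult_mat; simp add: algebra_simps; simp add: sc1C)
  next
    case f thus ?thesis using rc assms unfolding m by (simp add: XU_e U_e X_e flip_comm del: index_mult_mat; simp add: algebra_simps; simp add: sc1C)
  next
    case o thus ?thesis using rc assms unfolding m by (simp add: XU_e U_e X_e flip_comm del: index_mult_mat)
  qed
qed auto



lemma RR_comm:
  assumes "a < N" "j < N" "a \<noteq> j"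
  shows "sigma_z_rot N a \<alpha> * sigma_z_rot N j \<beta> = sigma_z_rot N j \<beta> * sigma_z_rot N a \<alpha>"
proof (rule eq_matI)
  fix r c assume "r < dim_row (sigma_z_rot N j \<beta> * sigma_z_rot N a \<alpha>)" "c < dim_col (sigma_z_rot N j \<beta> * sigma_z_rot N a \<alpha>)"
  hence rc: "r < 2^N" "c < 2^N" by auto
  have m1: "(sigma_z_rot N a \<alpha> * sigma_z_rot N j \<beta>) $$ (r,c) = sigma_z_rot N a \<alpha> $$ (r,r) * sigma_z_rot N j \<beta> $$ (r,c)
     + sigma_z_rot N a \<alpha> $$ (r,flip_bit a r) * sigma_z_rot N j \<beta> $$ (flip_bit a r,c)"
    by (rule mult2[OF carr(6) carr(6)]) (use assms rc in \<open>auto simp: R_e\<close>)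
  have m2: "(sigma_z_rot N j \<beta> * sigma_z_rot N a \<alpha>) $$ (r,c) = sigma_z_rot N j \<beta> $$ (r,r) * sigma_z_rot N a \<alpha> $$ (r,c)
     + sigma_z_rot N j \<beta> $$ (r,flip_bit j r) * sigma_z_rot N a \<alpha> $$ (flip_bit j r,c)"
    by (rule mult2[OF carr(6) carr(6)]) (use assms rc in \<open>auto simp: R_e\<close>)
  have ne: "flip_bit a (flip_bit j r) \<noteq> r" "flip_bit j (flip_bit a r) \<noteq> r" using assms by auto
  show "(sigma_z_rot N a \<alpha> * sigma_z_rot N j \<beta>) $$ (r, c) = (sigma_z_rot N j \<beta> * sigma_z_rot N a \<alpha>) $$ (r, c)"
    unfolding m1 m2 using assms rc ne
    by (auto simp: R_e flip_comm algebra_simps simp del: index_mult_mat)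
qed auto

definition UL :: "nat \<Rightarrow> (nat \<Rightarrow> real) \<Rightarrow> nat list \<Rightarrow> complex mat" where
  "UL N \<theta> L = foldr (\<lambda>j M. U_loc N j (\<theta> j) * M) L (idm N)"

lemma UL_simps: "UL N \<theta> [] = idm N" "UL N \<theta> (a # L) = U_loc N a (\<theta> a) * UL N \<theta> L"
  by (auto simp: UL_def)

lemma UL_carr[simp]: "UL N \<theta> L \<in> carrier_mat (2^N) (2^N)"
  by (induction L) (auto simp: UL_simps)

lemma adj_idm[simp]: "mat_adjoint (idm N) = idm N"
  by (rule eq_matI) (auto simp: I_e)

lemma idm_one: "idm N = 1\<^sub>m (2^N)" by (simp add: idm_def)

lemma UL_unitary:
  assumes "\<forall>x\<in>set L. x < N"
  shows "mat_adjoint (UL N \<theta> L) * UL N \<theta> L = idm N \<and> UL N \<theta> L * mat_adjoint (UL N \<theta> L) = idm N"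
  using assms
proof (induction L)
  case Nil thus ?case by (simp add: UL_simps; simp add: idm_one)
next
  case (Cons a L)
  let ?A = "mat_adjoint (UL N \<theta> L)" and ?B = "UL N \<theta> L" and ?U = "U_loc N a (\<theta> a)" and ?V = "U_loc N a (-\<theta> a)"
  have a: "a < N" using Cons by auto
  have IH: "?A * ?B = idm N" "?B * ?A = idm N" using Cons by auto
  have adj: "mat_adjoint (UL N \<theta> (a # L)) = ?A * ?V"
    by (simp add: UL_simps adj_mult[OF carr(5) UL_carr] adj_U[OF a])
  have c: "?A \<in> carrier_mat (2^N) (2^N)" "?B \<in> carrier_mat (2^N) (2^N)" "?U \<in> carrier_mat (2^N) (2^N)" "?V \<in> carrier_mat (2^N) (2^N)"
    by auto
  have VU: "?V * ?U = idm N" using UU[OF a] .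
  have UV: "?U * ?V = idm N" using UU[OF a, of "-\<theta> a"] by simp
  have e1: "(?A * ?V) * (?U * ?B) = ?A * (?V * (?U * ?B))" by (rule assoc_mult_mat[OF c(1) c(4)]) auto
  have e2: "?V * (?U * ?B) = (?V * ?U) * ?B" by (rule assoc_mult_mat[symmetric, OF c(4) c(3) c(2)])
  have 1: "(?A * ?V) * (?U * ?B) = idm N" unfolding e1 e2 VU using IH c by (simp add: idm_one left_mult_one_mat[OF c(2)])
  have e3: "(?U * ?B) * (?A * ?V) = ?U * (?B * (?A * ?V))" by (rule assoc_mult_mat[OF c(3) c(2) mult_carrier_mat[OF c(1) c(4)]])
  have e4: "?B * (?A * ?V) = (?B * ?A) * ?V" by (rule assoc_mult_mat[symmetric, OF c(2) c(1) c(4)])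
  have 2: "(?U * ?B) * (?A * ?V) = idm N" unfolding e3 e4 IH using UV c by (simp add: idm_one left_mult_one_mat[OF c(4)])
  show ?case using 1 2 adj by (simp add: UL_simps)
qed



lemma reassoc:
  fixes A V W U B :: "complex mat"
  assumes c: "A \<in> carrier_mat n n" "V \<in> carrier_mat n n" "W \<in> carrier_mat n n" "U \<in> carrier_mat n n" "B \<in> carrier_mat n n"
  shows "(A*V)*(W*(U*B)) = A*((V*(W*U))*B)"
proof -
  have "W*(U*B) = (W*U)*B" by (rule assoc_mult_mat[symmetric, OF c(3) c(4) c(5)])
  hence "(A*V)*(W*(U*B)) = (A*V)*((W*U)*B)" by simp
  also have "\<dots> = A*(V*((W*U)*B))" by (rule assoc_mult_mat[OF c(1) c(2)]) (use c in auto)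
  also have "V*((W*U)*B) = (V*(W*U))*B" by (rule assoc_mult_mat[symmetric]) (use c in auto)
  finally show ?thesis .
qed

lemma lin:
  fixes A P Q B :: "complex mat"
  assumes c: "A \<in> carrier_mat n n" "P \<in> carrier_mat n n" "Q \<in> carrier_mat n n" "B \<in> carrier_mat n n"
  shows "A*((x \<cdot>\<^sub>m P + y \<cdot>\<^sub>m Q)*B) = x \<cdot>\<^sub>m (A*(P*B)) + y \<cdot>\<^sub>m (A*(Q*B))"
    "A*((x \<cdot>\<^sub>m P - y \<cdot>\<^sub>m Q)*B) = x \<cdot>\<^sub>m (A*(P*B)) - y \<cdot>\<^sub>m (A*(Q*B))"
proof -
  have 1: "(x \<cdot>\<^sub>m P + y \<cdot>\<^sub>m Q)*B = x \<cdot>\<^sub>m (P*B) + y \<cdot>\<^sub>m (Q*B)"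
    using c by (simp add: add_mult_distrib_mat[of _ n n] mult_smult_assoc_mat[of _ n n])
  have 2: "(x \<cdot>\<^sub>m P - y \<cdot>\<^sub>m Q)*B = x \<cdot>\<^sub>m (P*B) - y \<cdot>\<^sub>m (Q*B)"
    using c by (simp add: minus_mult_distrib_mat[of _ n n] mult_smult_assoc_mat[of _ n n])
  show "A*((x \<cdot>\<^sub>m P + y \<cdot>\<^sub>m Q)*B) = x \<cdot>\<^sub>m (A*(P*B)) + y \<cdot>\<^sub>m (A*(Q*B))"
    unfolding 1 using c
    by (simp add: mult_add_distrib_mat[OF c(1) smult_carrier_mat[OF mult_carrier_mat[OF c(2) c(4)]] smult_carrier_mat[OF mult_carrier_mat[OF c(3) c(4)]]]
       mult_smult_distrib[OF c(1) mult_carrier_mat[OF c(2) c(4)]] mult_smult_distrib[OF c(1) mult_carrier_mat[OF c(3) c(4)]])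
  show "A*((x \<cdot>\<^sub>m P - y \<cdot>\<^sub>m Q)*B) = x \<cdot>\<^sub>m (A*(P*B)) - y \<cdot>\<^sub>m (A*(Q*B))"
    unfolding 2 using c
    by (simp add: mult_minus_distrib_mat[OF c(1) smult_carrier_mat[OF mult_carrier_mat[OF c(2) c(4)]] smult_carrier_mat[OF mult_carrier_mat[OF c(3) c(4)]]]
       mult_smult_distrib[OF c(1) mult_carrier_mat[OF c(2) c(4)]] mult_smult_distrib[OF c(1) mult_carrier_mat[OF c(3) c(4)]])
qed

lemma UL_conj:
  assumes "distinct L" "\<forall>x\<in>set L. x < N" "j < N"
  shows "mat_adjoint (UL N \<theta> L) * (sigma_z N j * UL N \<theta> L) = (if j \<in> set L then sigma_z_rot N j (\<theta> j) else sigma_z N j)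
       \<and> mat_adjoint (UL N \<theta> L) * (sigma_x N j * UL N \<theta> L) = (if j \<in> set L then xrot N j (\<theta> j) else sigma_x N j)"
  using assms
proof (induction L)
  case Nil
  show ?case by (simp add: UL_simps; simp add: idm_one)
next
  case (Cons a L)
  let ?A = "mat_adjoint (UL N \<theta> L)" and ?B = "UL N \<theta> L" and ?U = "U_loc N a (\<theta> a)" and ?V = "U_loc N a (-\<theta> a)"
  have a: "a < N" and aL: "a \<notin> set L" using Cons.prems by auto
  have IH: "?A * (sigma_z N j * ?B) = (if j \<in> set L then sigma_z_rot N j (\<theta> j) else sigma_z N j)"
     "?A * (sigma_x N j * ?B) = (if j \<in> set L then xrot N j (\<theta> j) else sigma_x N j)"
    using Cons by auto
  have adj: "mat_adjoint (?U * ?B) = ?A * ?V"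
    by (simp add: adj_mult[OF carr(5) UL_carr] adj_U[OF a])
  have c: "?A \<in> carrier_mat (2^N) (2^N)" "?B \<in> carrier_mat (2^N) (2^N)" "?U \<in> carrier_mat (2^N) (2^N)" "?V \<in> carrier_mat (2^N) (2^N)"
    by auto
  have r: "mat_adjoint (UL N \<theta> (a # L)) * (W * UL N \<theta> (a # L)) = ?A * ((?V * (W * ?U)) * ?B)"
    if "W \<in> carrier_mat (2^N) (2^N)" for W
    unfolding UL_simps(2) adj by (rule reassoc[OF c(1) c(4) that c(3) c(2)])
  show ?case
  proof (cases "a = j")
    case True
    have tj: "\<theta> j = 2 * (\<theta> j / 2)" by simp
    have z: "?V * (sigma_z N j * ?U) = sigma_z_rot N j (\<theta> j)"
      using CZ_same[OF a, of "\<theta> j / 2"] True by simp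
    have x: "?V * (sigma_x N j * ?U) = xrot N j (\<theta> j)"
      using CZ_same[OF a, of "\<theta> j / 2"] CX_same[OF a, of "\<theta> j / 2"] True by simp
    have jL: "j \<notin> set L" using aL True by simp
    show ?thesis
      unfolding r[OF carr(1)] r[OF carr(2)] z x
      using IH jL
      by (simp add: sigma_z_rot_def xrot_def lin[OF c(1) carr(1) carr(2) c(2)] lin[OF c(1) carr(2) carr(1) c(2)] True)
  next
    case False
    have z: "?V * (sigma_z N j * ?U) = sigma_z N j"
      using CZ_other[OF a Cons.prems(3) False] .
    have x: "?V * (sigma_x N j * ?U) = sigma_x N j"
      using CX_other[OF a Cons.prems(3) False] .
    show ?thesis
      unfolding r[OF carr(1)] r[OF carr(2)] z x
      using IH False by simp
  qed
qed



lemma mtrace_add: "A \<in> carrier_mat n n \<Longrightarrow> B \<in> carrier_mat n n \<Longrightarrow> mtrace (A + B) = mtrace A + mtrace B"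
  by (simp add: mtrace_def sum.distrib)

lemma mtrace_smult: "A \<in> carrier_mat n n \<Longrightarrow> mtrace (c \<cdot>\<^sub>m A) = c * mtrace A"
  by (simp add: mtrace_def sum_distrib_left)

definition fE :: "complex mat \<Rightarrow> complex mat \<Rightarrow> complex mat \<Rightarrow> real" where
  "fE \<rho> U M = Re (mtrace (\<rho> * (mat_adjoint U * (M * U))))"

lemma fE_add:
  assumes "\<rho> \<in> carrier_mat n n" "U \<in> carrier_mat n n" "M \<in> carrier_mat n n" "M' \<in> carrier_mat n n"
  shows "fE \<rho> U (M + M') = fE \<rho> U M + fE \<rho> U M'"
proof -
  let ?D = "mat_adjoint U"
  have c: "?D \<in> carrier_mat n n" using assms by simp
  have "(M + M') * U = M * U + M' * U" by (rule add_mult_distrib_mat[OF assms(3,4,2)])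
  moreover have "?D * (M * U + M' * U) = ?D * (M * U) + ?D * (M' * U)"
    by (rule mult_add_distrib_mat[OF c]) (use assms in auto)
  moreover have "\<rho> * (?D * (M * U) + ?D * (M' * U)) = \<rho> * (?D * (M * U)) + \<rho> * (?D * (M' * U))"
    by (rule mult_add_distrib_mat[OF assms(1)]) (use assms c in auto)
  moreover have c1: "\<rho> * (?D * (M * U)) \<in> carrier_mat n n" and c2: "\<rho> * (?D * (M' * U)) \<in> carrier_mat n n"
    using assms c by auto
  ultimately show ?thesis unfolding fE_def using assms c
    by (simp add: mtrace_add[OF c1 c2])
qed

lemma fE_smult:
  assumes "\<rho> \<in> carrier_mat n n" "U \<in> carrier_mat n n" "M \<in> carrier_mat n n"
  shows "fE \<rho> U (complex_of_real x \<cdot>\<^sub>m M) = x * fE \<rho> U M"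
proof -
  let ?D = "mat_adjoint U"
  have c: "?D \<in> carrier_mat n n" using assms by simp
  have "(complex_of_real x \<cdot>\<^sub>m M) * U = complex_of_real x \<cdot>\<^sub>m (M * U)" by (rule mult_smult_assoc_mat[OF assms(3,2)])
  moreover have "?D * (complex_of_real x \<cdot>\<^sub>m (M * U)) = complex_of_real x \<cdot>\<^sub>m (?D * (M * U))"
    by (rule mult_smult_distrib[OF c]) (use assms in auto)
  moreover have "\<rho> * (complex_of_real x \<cdot>\<^sub>m (?D * (M * U))) = complex_of_real x \<cdot>\<^sub>m (\<rho> * (?D * (M * U)))"
    by (rule mult_smult_distrib[OF assms(1)]) (use assms c in auto)
  moreover have c1: "\<rho> * (?D * (M * U)) \<in> carrier_mat n n"
    using assms c by auto
  ultimately show ?thesis unfolding fE_def using assms c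
    by (simp add: mtrace_smult[OF c1])
qed

lemma msum_carr: "\<forall>M\<in>set Ms. M \<in> carrier_mat (2^N) (2^N) \<Longrightarrow> msum N Ms \<in> carrier_mat (2^N) (2^N)"
  by (induction Ms) (auto simp: msum_def)

lemma fE_msum:
  assumes "\<rho> \<in> carrier_mat (2^N) (2^N)" "U \<in> carrier_mat (2^N) (2^N)" "\<forall>M\<in>set Ms. M \<in> carrier_mat (2^N) (2^N)"
  shows "fE \<rho> U (msum N Ms) = sum_list (map (fE \<rho> U) Ms)"
  using assms(3)
proof (induction Ms)
  case Nil
  have "mat_adjoint U * (0\<^sub>m (2^N) (2^N) * U) = 0\<^sub>m (2^N) (2^N)" using assms by simp
  thus ?case using assms by (simp add: msum_def fE_def mtrace_def)
next
  case (Cons M Ms)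
  have cs: "msum N Ms \<in> carrier_mat (2^N) (2^N)" using Cons.prems
    by (induction Ms) (auto simp: msum_def)
  have "msum N (M # Ms) = M + msum N Ms" by (simp add: msum_def)
  thus ?case using Cons fE_add[OF assms(1,2) _ cs, of M] by simp
qed

lemma sum_list_concat': "sum_list (concat xss) = sum_list (map sum_list (xss :: real list list))"
  by (induction xss) auto

lemma sum_list_upt: "sum_list (map g [m..<n]) = (\<Sum>j\<in>{m..<n}. g j)"
  by (simp add: sum_set_upt_conv_sum_list_nat[symmetric])

lemma EF_formula:
  assumes "\<rho> \<in> carrier_mat (2^N) (2^N)"
  shows "E_F N \<epsilon> \<Delta> \<rho> \<theta> = Re (mtrace (\<rho> * ((1/2) \<cdot>\<^sub>m idm N)))
     + (\<Sum>j\<in>{0..<N}. \<epsilon> j / 2 * Re (mtrace (\<rho> * sigma_z_rot N j (\<theta> j))))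
     + (\<Sum>j\<in>{0..<N}. \<Sum>k\<in>{Suc j..<N}. \<Delta> j k * Re (mtrace (\<rho> * (sigma_z_rot N j (\<theta> j) * sigma_z_rot N k (\<theta> k)))))"
proof -
  let ?U = "U_fb N \<theta>"
  let ?D = "mat_adjoint ?U"
  have Ueq: "?U = UL N \<theta> [0..<N]" by (simp add: U_fb_def UL_def)
  have cU: "?U \<in> carrier_mat (2^N) (2^N)" unfolding Ueq by simp
  have cD: "?D \<in> carrier_mat (2^N) (2^N)" using cU by simp
  have un: "?D * ?U = idm N" "?U * ?D = idm N" using UL_unitary[of "[0..<N]" N \<theta>] unfolding Ueq by auto
  have cj: "?D * (sigma_z N j * ?U) = sigma_z_rot N j (\<theta> j)" if "j < N" for j
    using UL_conj[of "[0..<N]" N j \<theta>] that unfolding Ueq by auto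
  let ?H = "H_S N \<epsilon> \<Delta>"
  have cH: "?H \<in> carrier_mat (2^N) (2^N)"
    unfolding H_S_def by (rule msum_carr) auto
  have tr: "mtrace (?U * \<rho> * ?D * ?H) = mtrace (\<rho> * (?D * (?H * ?U)))"
  proof -
    have "?U * \<rho> * ?D * ?H = ?U * (\<rho> * (?D * ?H))"
      using cU cD cH assms by (simp add: assoc_mult_mat[OF mult_carrier_mat[OF cU assms] cD cH] assoc_mult_mat[OF cU assms mult_carrier_mat[OF cD cH]])
    hence "mtrace (?U * \<rho> * ?D * ?H) = mtrace ((\<rho> * (?D * ?H)) * ?U)"
      using mtrace_comm[OF cU, of "\<rho> * (?D * ?H)"] cD cH assms by simp
    also have "(\<rho> * (?D * ?H)) * ?U = \<rho> * (?D * (?H * ?U))"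
      using cU cD cH assms by (simp add: assoc_mult_mat[OF assms mult_carrier_mat[OF cD cH] cU] assoc_mult_mat[OF cD cH cU])
    finally show ?thesis .
  qed
  have E: "E_F N \<epsilon> \<Delta> \<rho> \<theta> = fE \<rho> ?U ?H" unfolding E_F_def fE_def tr ..
  have f1: "fE \<rho> ?U ((1/2) \<cdot>\<^sub>m idm N) = Re (mtrace (\<rho> * ((1/2) \<cdot>\<^sub>m idm N)))"
  proof -
    have "((1/2) \<cdot>\<^sub>m idm N) * ?U = (1/2) \<cdot>\<^sub>m ?U" using cU by (simp add: idm_one mult_smult_assoc_mat[OF one_carrier_mat cU] left_mult_one_mat[OF cU])
    moreover have "?D * ((1/2) \<cdot>\<^sub>m ?U) = (1/2) \<cdot>\<^sub>m idm N" using cU cD un by (simp add: mult_smult_distrib[OF cD cU])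
    ultimately show ?thesis unfolding fE_def by simp
  qed
  have f2: "fE \<rho> ?U (complex_of_real (\<epsilon> j / 2) \<cdot>\<^sub>m sigma_z N j) = \<epsilon> j / 2 * Re (mtrace (\<rho> * sigma_z_rot N j (\<theta> j)))"
    if "j < N" for j
  proof -
    have "fE \<rho> ?U (sigma_z N j) = Re (mtrace (\<rho> * sigma_z_rot N j (\<theta> j)))"
      unfolding fE_def cj[OF that] ..
    thus ?thesis using fE_smult[OF assms cU carr(1), of "\<epsilon> j / 2" j] by simp
  qed
  have f3: "fE \<rho> ?U (complex_of_real (\<Delta> j k) \<cdot>\<^sub>m (sigma_z N j * sigma_z N k))
      = \<Delta> j k * Re (mtrace (\<rho> * (sigma_z_rot N j (\<theta> j) * sigma_z_rot N k (\<theta> k))))"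
    if "j < N" "k < N" for j k
  proof -
    have "?D * ((sigma_z N j * sigma_z N k) * ?U) = (?D * (sigma_z N j * ?U)) * (?D * (sigma_z N k * ?U))"
    proof -
      have "?U * (?D * (sigma_z N k * ?U)) = (?U * ?D) * (sigma_z N k * ?U)"
        by (rule assoc_mult_mat[symmetric, OF cU cD mult_carrier_mat[OF carr(1) cU]])
      hence u: "?U * (?D * (sigma_z N k * ?U)) = sigma_z N k * ?U" using un cU by (simp add: idm_one)
      have cY: "?D * (sigma_z N k * ?U) \<in> carrier_mat (2^N) (2^N)" using mult_carrier_mat[OF cD mult_carrier_mat[OF carr(1) cU]] .
      have e1: "(sigma_z N j * sigma_z N k) * ?U = sigma_z N j * (sigma_z N k * ?U)"
        by (rule assoc_mult_mat[OF carr(1) carr(1) cU])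
      have e2: "(?D * (sigma_z N j * ?U)) * (?D * (sigma_z N k * ?U)) = ?D * ((sigma_z N j * ?U) * (?D * (sigma_z N k * ?U)))"
        by (rule assoc_mult_mat[OF cD mult_carrier_mat[OF carr(1) cU] cY])
      have e3: "(sigma_z N j * ?U) * (?D * (sigma_z N k * ?U)) = sigma_z N j * (?U * (?D * (sigma_z N k * ?U)))"
        by (rule assoc_mult_mat[OF carr(1) cU cY])
      show ?thesis unfolding e1 e2 e3 u ..
    qed
    hence "fE \<rho> ?U (sigma_z N j * sigma_z N k) = Re (mtrace (\<rho> * (sigma_z_rot N j (\<theta> j) * sigma_z_rot N k (\<theta> k))))"
      unfolding fE_def cj[OF that(1)] cj[OF that(2)] by simp
    thus ?thesis using fE_smult[OF assms cU mult_carrier_mat[OF carr(1) carr(1)], of "\<Delta> j k" j k] by simp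
  qed
  have Hl: "?H = msum N ([(1/2) \<cdot>\<^sub>m idm N]
      @ map (\<lambda>j. complex_of_real (\<epsilon> j / 2) \<cdot>\<^sub>m sigma_z N j) [0..<N]
      @ concat (map (\<lambda>j. map (\<lambda>k. complex_of_real (\<Delta> j k) \<cdot>\<^sub>m (sigma_z N j * sigma_z N k))
                              [Suc j..<N]) [0..<N]))" by (simp add: H_S_def)
  have "fE \<rho> ?U ?H = fE \<rho> ?U ((1/2) \<cdot>\<^sub>m idm N)
      + sum_list (map (\<lambda>j. fE \<rho> ?U (complex_of_real (\<epsilon> j / 2) \<cdot>\<^sub>m sigma_z N j)) [0..<N])
      + sum_list (map (\<lambda>j. sum_list (map (\<lambda>k. fE \<rho> ?U (complex_of_real (\<Delta> j k) \<cdot>\<^sub>m (sigma_z N j * sigma_z N k))) [Suc j..<N])) [0..<N])"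
    unfolding Hl by (subst fE_msum[OF assms cU]) (auto simp: sum_list_concat' map_concat comp_def)
  also have "\<dots> = Re (mtrace (\<rho> * ((1/2) \<cdot>\<^sub>m idm N)))
     + (\<Sum>j\<in>{0..<N}. \<epsilon> j / 2 * Re (mtrace (\<rho> * sigma_z_rot N j (\<theta> j))))
     + (\<Sum>j\<in>{0..<N}. \<Sum>k\<in>{Suc j..<N}. \<Delta> j k * Re (mtrace (\<rho> * (sigma_z_rot N j (\<theta> j) * sigma_z_rot N k (\<theta> k)))))"
    unfolding f1 sum_list_upt using f2 f3 by (auto intro!: sum.cong)
  finally show ?thesis using E by simp
qed



lemma dsum:
  fixes g :: "nat \<Rightarrow> real"
  assumes "j0 < N"
  shows "(\<Sum>j\<in>{0..<N}. \<Sum>k\<in>{Suc j..<N}. (if j = j0 then g k else if k = j0 then g j else 0))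
       = (\<Sum>k\<in>{0..<N} - {j0}. g k)"
proof -
  have inner: "(\<Sum>k\<in>{Suc j..<N}. (if j = j0 then g k else if k = j0 then g j else 0))
     = (if j = j0 then (\<Sum>k\<in>{Suc j0..<N}. g k) else 0) + (if j < j0 then g j else 0)" for j
  proof (cases "j = j0")
    case True thus ?thesis by simp
  next
    case False
    have "(\<Sum>k\<in>{Suc j..<N}. (if j = j0 then g k else if k = j0 then g j else 0))
        = (\<Sum>k\<in>{Suc j..<N}. (if k = j0 then g j else 0))" using False by simp
    also have "\<dots> = (if j0 \<in> {Suc j..<N} then g j else 0)" by simp
    finally show ?thesis using False assms by auto
  qed
  have "(\<Sum>j\<in>{0..<N}. \<Sum>k\<in>{Suc j..<N}. (if j = j0 then g k else if k = j0 then g j else 0))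
      = (\<Sum>j\<in>{0..<N}. (if j = j0 then (\<Sum>k\<in>{Suc j0..<N}. g k) else 0)) + (\<Sum>j\<in>{0..<N}. (if j < j0 then g j else 0))"
    unfolding inner by (simp add: sum.distrib)
  also have "\<dots> = (\<Sum>k\<in>{Suc j0..<N}. g k) + (\<Sum>j\<in>{0..<j0}. g j)"
  proof -
    have "(\<Sum>j\<in>{0..<N}. (if j < j0 then g j else 0)) = (\<Sum>j\<in>{0..<j0}. (if j < j0 then g j else 0))"
      by (rule sum.mono_neutral_right) (use assms in auto)
    also have "\<dots> = (\<Sum>j\<in>{0..<j0}. g j)" by simp
    finally show ?thesis using assms by (simp add: sum.delta)
  qed
  also have "\<dots> = (\<Sum>k\<in>{0..<N} - {j0}. g k)"
  proof -
    have "{0..<N} - {j0} = {0..<j0} \<union> {Suc j0..<N}" using assms by auto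
    thus ?thesis by (simp add: sum.union_disjoint)
  qed
  finally show ?thesis .
qed

lemma atan2_prop: "x * sin (atan2 y x) = y * cos (atan2 y x)"
proof -
  have base: "x * sin (arctan (y/x)) = y * cos (arctan (y/x))" if "x \<noteq> 0"
  proof -
    have c: "cos (arctan (y/x)) \<noteq> 0" by (simp add: cos_arctan_not_zero)
    have "sin (arctan (y/x)) = tan (arctan (y/x)) * cos (arctan (y/x))" using c by (simp add: tan_def)
    also have "\<dots> = y / x * cos (arctan (y/x))" by (simp add: tan_arctan)
    finally show ?thesis using that by simp
  qed
  show ?thesis
    unfolding atan2_def using base by (auto simp: sin_add cos_add sin_diff cos_diff)
qed

lemma trig_final:
  fixes A B t :: real
  assumes h: "A * sin t + B * cos t = 0"
  shows "(A \<noteq> 0 \<longrightarrow> tan t = - B / A) \<and> ((A, B) \<noteq> (0, 0) \<longrightarrow> (\<exists>m::int. t = atan2 (- B) A + of_int m * pi))"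
proof (intro conjI impI)
  assume A: "A \<noteq> 0"
  have "cos t \<noteq> 0"
  proof
    assume "cos t = 0"
    moreover have "sin t ^ 2 + cos t ^ 2 = 1" by simp
    ultimately have "sin t \<noteq> 0" by auto
    thus False using h A \<open>cos t = 0\<close> by simp
  qed
  thus "tan t = - B / A" using h A by (simp add: tan_def field_simps)
next
  assume AB: "(A, B) \<noteq> (0, 0)"
  define \<phi> where "\<phi> = atan2 (- B) A"
  have p: "A * sin \<phi> + B * cos \<phi> = 0" using atan2_prop[of A "-B"] unfolding \<phi>_def by simp
  have "sin (t - \<phi>) = 0"
  proof (cases "A = 0")
    case True
    hence "B \<noteq> 0" using AB by simp
    hence "cos t = 0" "cos \<phi> = 0" using h p True by auto
    thus ?thesis by (simp add: sin_diff)
  next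
    case False
    have "sin t = - B * cos t / A" "sin \<phi> = - B * cos \<phi> / A" using h p False by (simp_all add: field_simps)
    thus ?thesis by (simp add: sin_diff field_simps)
  qed
  then obtain m :: int where "t - \<phi> = of_int m * pi" using sin_zero_iff_int2 by blast
  thus "\<exists>m::int. t = atan2 (- B) A + of_int m * pi" unfolding \<phi>_def by (intro exI[of _ m]) simp
qed



lemma mtrace_minus: "A \<in> carrier_mat n n \<Longrightarrow> B \<in> carrier_mat n n \<Longrightarrow> mtrace (A - B) = mtrace A - mtrace B"
  by (simp add: mtrace_def sum_subtractf)

lemma tr_lin:
  fixes \<rho> P Q M :: "complex mat"
  assumes c: "\<rho> \<in> carrier_mat n n" "P \<in> carrier_mat n n" "Q \<in> carrier_mat n n" "M \<in> carrier_mat n n"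
  shows "Re (mtrace (\<rho> * ((complex_of_real x \<cdot>\<^sub>m P - complex_of_real y \<cdot>\<^sub>m Q) * M)))
     = x * Re (mtrace (\<rho> * P * M)) - y * Re (mtrace (\<rho> * Q * M))"
proof -
  have cPM: "P * M \<in> carrier_mat n n" "Q * M \<in> carrier_mat n n" using c by auto
  have 1: "(complex_of_real x \<cdot>\<^sub>m P - complex_of_real y \<cdot>\<^sub>m Q) * M = complex_of_real x \<cdot>\<^sub>m (P*M) - complex_of_real y \<cdot>\<^sub>m (Q*M)"
    using c by (simp add: minus_mult_distrib_mat[of _ n n] mult_smult_assoc_mat[of _ n n])
  have 2: "\<rho> * (complex_of_real x \<cdot>\<^sub>m (P*M) - complex_of_real y \<cdot>\<^sub>m (Q*M))
      = complex_of_real x \<cdot>\<^sub>m (\<rho>*(P*M)) - complex_of_real y \<cdot>\<^sub>m (\<rho>*(Q*M))"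
    by (simp add: mult_minus_distrib_mat[OF c(1) smult_carrier_mat[OF cPM(1)] smult_carrier_mat[OF cPM(2)]]
       mult_smult_distrib[OF c(1) cPM(1)] mult_smult_distrib[OF c(1) cPM(2)])
  have c3: "\<rho>*(P*M) \<in> carrier_mat n n" "\<rho>*(Q*M) \<in> carrier_mat n n" using c by auto
  have 3: "mtrace (complex_of_real x \<cdot>\<^sub>m (\<rho>*(P*M)) - complex_of_real y \<cdot>\<^sub>m (\<rho>*(Q*M)))
      = complex_of_real x * mtrace (\<rho>*(P*M)) - complex_of_real y * mtrace (\<rho>*(Q*M))"
    by (simp add: mtrace_minus[OF smult_carrier_mat[OF c3(1)] smult_carrier_mat[OF c3(2)]] mtrace_smult[OF c3(1)] mtrace_smult[OF c3(2)])
  have 4: "\<rho>*(P*M) = \<rho>*P*M" "\<rho>*(Q*M) = \<rho>*Q*M"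
    by (rule assoc_mult_mat[symmetric, OF c(1) c(2) c(4)], rule assoc_mult_mat[symmetric, OF c(1) c(3) c(4)])
  show ?thesis unfolding 1 2 3 unfolding 4 by simp
qed

lemma tr_rot2:
  assumes "\<rho> \<in> carrier_mat (2^N) (2^N)" "M \<in> carrier_mat (2^N) (2^N)"
  shows "Re (mtrace (\<rho> * (sigma_z_rot N j t * M)))
     = cos t * Re (mtrace (\<rho> * sigma_z N j * M)) - sin t * Re (mtrace (\<rho> * sigma_x N j * M))"
  unfolding sigma_z_rot_def by (rule tr_lin[OF assms(1) carr(1) carr(2) assms(2)])

lemma tr_rot1:
  assumes "\<rho> \<in> carrier_mat (2^N) (2^N)"
  shows "Re (mtrace (\<rho> * sigma_z_rot N j t))
     = cos t * Re (mtrace (\<rho> * sigma_z N j)) - sin t * Re (mtrace (\<rho> * sigma_x N j))"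
proof -
  have "sigma_z_rot N j t = sigma_z_rot N j t * 1\<^sub>m (2^N)" by (simp add: right_mult_one_mat[OF carr(6)])
  moreover have "\<rho> * sigma_z N j * 1\<^sub>m (2^N) = \<rho> * sigma_z N j" "\<rho> * sigma_x N j * 1\<^sub>m (2^N) = \<rho> * sigma_x N j"
    using assms by (auto intro!: right_mult_one_mat)
  moreover have "Re (mtrace (\<rho> * (sigma_z_rot N j t * 1\<^sub>m (2^N))))
     = cos t * Re (mtrace (\<rho> * sigma_z N j * 1\<^sub>m (2^N))) - sin t * Re (mtrace (\<rho> * sigma_x N j * 1\<^sub>m (2^N)))"
    by (rule tr_rot2[OF assms one_carrier_mat])
  ultimately show ?thesis by simp
qed



lemma Ecalc:
  assumes \<rho>: "\<rho> \<in> carrier_mat (2^N) (2^N)" and j0: "j0 < N"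
  shows "\<exists>C. \<forall>t. E_F N \<epsilon> \<Delta> \<rho> (\<theta>s(j0 := t)) = C + cos t * A_coef N \<epsilon> \<Delta> \<rho> j0 \<theta>s - sin t * B_coef N \<epsilon> \<Delta> \<rho> j0 \<theta>s"
proof -
  define a1 where "a1 = Re (mtrace (\<rho> * sigma_z N j0))"
  define b1 where "b1 = Re (mtrace (\<rho> * sigma_x N j0))"
  define \<gamma> where "\<gamma> k = \<Delta> (min j0 k) (max j0 k) * Re (mtrace (\<rho> * sigma_z N j0 * sigma_z_rot N k (\<theta>s k)))" for k
  define \<delta> where "\<delta> k = \<Delta> (min j0 k) (max j0 k) * Re (mtrace (\<rho> * sigma_x N j0 * sigma_z_rot N k (\<theta>s k)))" for k
  define T1 where "T1 j = \<epsilon> j / 2 * Re (mtrace (\<rho> * sigma_z_rot N j (\<theta>s j)))" for j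
  define T2 where "T2 j k = \<Delta> j k * Re (mtrace (\<rho> * (sigma_z_rot N j (\<theta>s j) * sigma_z_rot N k (\<theta>s k))))" for j k
  define C where "C = Re (mtrace (\<rho> * ((1/2) \<cdot>\<^sub>m idm N)))
     + (\<Sum>j\<in>{0..<N}. if j = j0 then 0 else T1 j)
     + (\<Sum>j\<in>{0..<N}. \<Sum>k\<in>{Suc j..<N}. if j = j0 \<or> k = j0 then 0 else T2 j k)"
  have A: "A_coef N \<epsilon> \<Delta> \<rho> j0 \<theta>s = \<epsilon> j0 / 2 * a1 + (\<Sum>k\<in>{0..<N} - {j0}. \<gamma> k)"
    unfolding A_coef_def a1_def \<gamma>_def ..
  have B: "B_coef N \<epsilon> \<Delta> \<rho> j0 \<theta>s = \<epsilon> j0 / 2 * b1 + (\<Sum>k\<in>{0..<N} - {j0}. \<delta> k)"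
    unfolding B_coef_def b1_def \<delta>_def ..
  show ?thesis
  proof (intro exI allI)
    fix t
    let ?th = "\<theta>s(j0 := t)"
    have S1: "(\<Sum>j\<in>{0..<N}. \<epsilon> j / 2 * Re (mtrace (\<rho> * sigma_z_rot N j (?th j))))
        = (\<Sum>j\<in>{0..<N}. (if j = j0 then 0 else T1 j) + cos t * (if j = j0 then \<epsilon> j0 / 2 * a1 else 0)
                         - sin t * (if j = j0 then \<epsilon> j0 / 2 * b1 else 0))"
    proof (rule sum.cong[OF refl])
      fix j assume "j \<in> {0..<N}"
      show "\<epsilon> j / 2 * Re (mtrace (\<rho> * sigma_z_rot N j (?th j))) = (if j = j0 then 0 else T1 j) + cos t * (if j = j0 then \<epsilon> j0 / 2 * a1 else 0)
                         - sin t * (if j = j0 then \<epsilon> j0 / 2 * b1 else 0)"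
        by (cases "j = j0") (auto simp: T1_def a1_def b1_def tr_rot1[OF \<rho>] algebra_simps)
    qed
    also have "\<dots> = (\<Sum>j\<in>{0..<N}. if j = j0 then 0 else T1 j) + cos t * (\<epsilon> j0 / 2 * a1) - sin t * (\<epsilon> j0 / 2 * b1)"
      using j0 by (simp add: sum.distrib sum_subtractf sum_distrib_left[symmetric] if_distrib[of "\<lambda>x. cos t * x"] if_distrib[of "\<lambda>x. sin t * x"])
    finally have S1: "(\<Sum>j\<in>{0..<N}. \<epsilon> j / 2 * Re (mtrace (\<rho> * sigma_z_rot N j (?th j))))
       = (\<Sum>j\<in>{0..<N}. if j = j0 then 0 else T1 j) + cos t * (\<epsilon> j0 / 2 * a1) - sin t * (\<epsilon> j0 / 2 * b1)" .
    have pw: "\<Delta> j k * Re (mtrace (\<rho> * (sigma_z_rot N j (?th j) * sigma_z_rot N k (?th k))))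
       = (if j = j0 \<or> k = j0 then 0 else T2 j k)
         + cos t * (if j = j0 then \<gamma> k else if k = j0 then \<gamma> j else 0)
         - sin t * (if j = j0 then \<delta> k else if k = j0 then \<delta> j else 0)"
      if jk: "j < N" "Suc j \<le> k" "k < N" for j k
    proof -
      consider (a) "j = j0" | (b) "k = j0" | (c) "j \<noteq> j0" "k \<noteq> j0" by blast
      thus ?thesis
      proof cases
        case a
        hence "k \<noteq> j0" using jk by auto
        thus ?thesis using a jk
          by (simp add: tr_rot2[OF \<rho> carr(6)] \<gamma>_def \<delta>_def min_def max_def algebra_simps)
      next
        case b
        hence jn: "j \<noteq> j0" using jk by auto
        have "sigma_z_rot N j (\<theta>s j) * sigma_z_rot N j0 t = sigma_z_rot N j0 t * sigma_z_rot N j (\<theta>s j)"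
          by (rule RR_comm) (use jk b jn in auto)
        thus ?thesis using b jk jn
          by (simp add: tr_rot2[OF \<rho> carr(6)] \<gamma>_def \<delta>_def min_def max_def algebra_simps)
      next
        case c thus ?thesis by (simp add: T2_def)
      qed
    qed
    have "(\<Sum>j\<in>{0..<N}. \<Sum>k\<in>{Suc j..<N}. \<Delta> j k * Re (mtrace (\<rho> * (sigma_z_rot N j (?th j) * sigma_z_rot N k (?th k)))))
       = (\<Sum>j\<in>{0..<N}. \<Sum>k\<in>{Suc j..<N}. (if j = j0 \<or> k = j0 then 0 else T2 j k)
         + cos t * (if j = j0 then \<gamma> k else if k = j0 then \<gamma> j else 0)
         - sin t * (if j = j0 then \<delta> k else if k = j0 then \<delta> j else 0))"
      by (intro sum.cong refl) (use pw in auto)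
    also have "\<dots> = (\<Sum>j\<in>{0..<N}. \<Sum>k\<in>{Suc j..<N}. if j = j0 \<or> k = j0 then 0 else T2 j k)
         + cos t * (\<Sum>j\<in>{0..<N}. \<Sum>k\<in>{Suc j..<N}. (if j = j0 then \<gamma> k else if k = j0 then \<gamma> j else 0))
         - sin t * (\<Sum>j\<in>{0..<N}. \<Sum>k\<in>{Suc j..<N}. (if j = j0 then \<delta> k else if k = j0 then \<delta> j else 0))"
      by (simp add: sum.distrib sum_subtractf sum_distrib_left)
    also have "\<dots> = (\<Sum>j\<in>{0..<N}. \<Sum>k\<in>{Suc j..<N}. if j = j0 \<or> k = j0 then 0 else T2 j k)
         + cos t * (\<Sum>k\<in>{0..<N} - {j0}. \<gamma> k) - sin t * (\<Sum>k\<in>{0..<N} - {j0}. \<delta> k)"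
      by (simp add: dsum[OF j0])
    finally have S2: "(\<Sum>j\<in>{0..<N}. \<Sum>k\<in>{Suc j..<N}. \<Delta> j k * Re (mtrace (\<rho> * (sigma_z_rot N j (?th j) * sigma_z_rot N k (?th k)))))
       = (\<Sum>j\<in>{0..<N}. \<Sum>k\<in>{Suc j..<N}. if j = j0 \<or> k = j0 then 0 else T2 j k)
         + cos t * (\<Sum>k\<in>{0..<N} - {j0}. \<gamma> k) - sin t * (\<Sum>k\<in>{0..<N} - {j0}. \<delta> k)" .
    show "E_F N \<epsilon> \<Delta> \<rho> ?th = C + cos t * A_coef N \<epsilon> \<Delta> \<rho> j0 \<theta>s - sin t * B_coef N \<epsilon> \<Delta> \<rho> j0 \<theta>s"
      unfolding EF_formula[OF \<rho>] S1 S2 A B C_def by (simp add: algebra_simps)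
  qed
qed

theorem theorem1:
  fixes N :: nat and \<epsilon> :: "nat \<Rightarrow> real" and \<Delta> :: "nat \<Rightarrow> nat \<Rightarrow> real"
    and \<rho> :: "complex mat" and \<theta>s :: "nat \<Rightarrow> real"
  assumes "N \<ge> 1"
    and "density_matrix N \<rho>"
    and "\<forall>\<theta>. E_F N \<epsilon> \<Delta> \<rho> \<theta>s \<le> E_F N \<epsilon> \<Delta> \<rho> \<theta>"
  shows "\<forall>j<N.
           (A_coef N \<epsilon> \<Delta> \<rho> j \<theta>s \<noteq> 0 \<longrightarrow>
              tan (\<theta>s j) = - B_coef N \<epsilon> \<Delta> \<rho> j \<theta>s / A_coef N \<epsilon> \<Delta> \<rho> j \<theta>s)
         \<and> ((A_coef N \<epsilon> \<Delta> \<rho> j \<theta>s, B_coef N \<epsilon> \<Delta> \<rho> j \<theta>s) \<noteq> (0, 0) \<longrightarrow>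
              (\<exists>m::int. \<theta>s j = atan2 (- B_coef N \<epsilon> \<Delta> \<rho> j \<theta>s) (A_coef N \<epsilon> \<Delta> \<rho> j \<theta>s)
                             + of_int m * pi))"
proof (intro allI impI)
  fix j assume j: "j < N"
  have \<rho>: "\<rho> \<in> carrier_mat (2^N) (2^N)" using assms(2) by (simp add: density_matrix_def)
  let ?A = "A_coef N \<epsilon> \<Delta> \<rho> j \<theta>s" and ?B = "B_coef N \<epsilon> \<Delta> \<rho> j \<theta>s"
  obtain C where C: "\<And>t. E_F N \<epsilon> \<Delta> \<rho> (\<theta>s(j := t)) = C + cos t * ?A - sin t * ?B"
    using Ecalc[OF \<rho> j, of \<epsilon> \<Delta> \<theta>s] by blast
  define G where "G t = C + cos t * ?A - sin t * ?B" for t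
  have min: "G (\<theta>s j) \<le> G y" for y
  proof -
    have "G (\<theta>s j) = E_F N \<epsilon> \<Delta> \<rho> \<theta>s" using C[of "\<theta>s j"] by (simp add: G_def)
    also have "\<dots> \<le> E_F N \<epsilon> \<Delta> \<rho> (\<theta>s(j := y))" using assms(3) by blast
    also have "\<dots> = G y" using C[of y] by (simp add: G_def)
    finally show ?thesis .
  qed
  have d: "DERIV G (\<theta>s j) :> (- sin (\<theta>s j) * ?A - cos (\<theta>s j) * ?B)"
    unfolding G_def by (auto intro!: derivative_eq_intros)
  have "- sin (\<theta>s j) * ?A - cos (\<theta>s j) * ?B = 0"
    by (rule DERIV_local_min[OF d, of 1]) (use min in auto)
  hence "?A * sin (\<theta>s j) + ?B * cos (\<theta>s j) = 0" by (simp add: algebra_simps)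
  from trig_final[OF this]
  show "(?A \<noteq> 0 \<longrightarrow> tan (\<theta>s j) = - ?B / ?A) \<and>
        ((?A, ?B) \<noteq> (0, 0) \<longrightarrow> (\<exists>m::int. \<theta>s j = atan2 (- ?B) ?A + of_int m * pi))" .
qed

end
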